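(* For the symmetric complex Brownian motion GSP $b$ on $\mathbb R$ described in the context, the Weyl symbol of its covariance operator is $$\sigma_b(x,\xi)=2x^2\Big(\frac{\sin(x\xi)}{x\xi}\Big)^2h(x),\qquad (x,\xi)\in\mathbb R^2,$$ where $\frac{\sin 0}{0}:=1$ and $h$ is the Heaviside function.
   Context: Let $b_1,b_2:[0,\infty)\to L^2_0(\Omega)$ be independent real-valued Gaussian processes with $\mathbf E(b_j(x)b_j(y))=\tfrac12\min(x,y)$, set $b=b_1+ib_2$ and $b(x)=0$ for $x<0$; $(b,\varphi)=\int_{\mathbb R}b(x)\overline{\varphi(x)}dx$ defines a tempered GSP on $\mathbb R$ with covariance distribution $k_b(x,y)=\mathbf E(b(x)\overline{b(y)})=\min(x,y)$ for $x,y\ge0$ and $0$ otherwise. The covariance operator is $(\mathscr K_b\psi,\varphi)=(k_b,\varphi\otimes\overline\psi)$ (pairings conjugate linear in the second slot). The Weyl symbol of a continuous linear $\mathscr K:\mathscr S(\mathbb R)\to\mathscr S'(\mathbb R)$ is the unique $\sigma\in\mathscr S'(\mathbb R^2)$ with $(\mathscr Kf,g)=(2\pi)^{-1/2}(\sigma,W(g,f))$, where $W(g,f)(x,\xi)=(2\pi)^{-1/2}\int g(x+y/2)\overline{f(x-y/2)}e^{-iy\xi}dy$; equivalently $\sigma=(2\pi)^{1/2}\mathscr F_2(k\circ\kappa)$ with $\kappa(x,y)=(x+y/2,x-y/2)$ and $\mathscr F_2$ the Fourier transform $(2\pi)^{-1/2}\int\cdot\,e^{-iy\xi}dy$ in the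 second variable. *)

theory Defs
  imports "HOL-Analysis.Analysis"
begin

definition nderiv :: "nat \<Rightarrow> (real \<Rightarrow> complex) \<Rightarrow> real \<Rightarrow> complex" where
  "nderiv n f = ((\<lambda>g x. vector_derivative g (at x)) ^^ n) f"

definition schwartz :: "(real \<Rightarrow> complex) \<Rightarrow> bool" where
  "schwartz f \<longleftrightarrow>
     (\<forall>n x. nderiv n f differentiable (at x)) \<and>
     (\<forall>n m. bounded (range (\<lambda>x. complex_of_real (x ^ m) * nderiv n f x)))"

text \<open>Covariance distribution of the complex Brownian motion b (a locally integrable function).\<close>
definition kb :: "real \<Rightarrow> real \<Rightarrow> complex" where
  "kb x y = (if 0 \<le> x \<and> 0 \<le> y then complex_of_real (min x y) else 0)"

definition wigner :: "(real \<Rightarrow> complex) \<Rightarrow> (real \<Rightarrow> complex) \<Rightarrow> real \<Rightarrow> real \<Rightarrow> complex" where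
  "wigner g f x \<xi> = complex_of_real (1 / sqrt (2 * pi)) *
     (LINT y|lborel. g (x + y / 2) * cnj (f (x - y / 2)) * cis (- (y * \<xi>)))"

text \<open>Covariance operator pairing (K_b f, g) = (k_b, g \<otimes> conj f).\<close>
definition cov_pairing :: "(real \<Rightarrow> real \<Rightarrow> complex) \<Rightarrow> (real \<Rightarrow> complex) \<Rightarrow> (real \<Rightarrow> complex) \<Rightarrow> complex" where
  "cov_pairing k f g = (LINT p|lborel. k (fst p) (snd p) * cnj (g (fst p)) * f (snd p))"

definition sinc :: "real \<Rightarrow> real" where
  "sinc t = (if t = 0 then 1 else sin t / t)"

definition heaviside :: "real \<Rightarrow> real" where
  "heaviside x = (if 0 \<le> x then 1 else 0)"

text \<open>A locally integrable function sigma is the Weyl symbol of the operator with kernel k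
  iff (K f, g) = (2 pi)^(-1/2) (sigma, W(g,f)) for all Schwartz f, g
  (pairing conjugate linear in the second slot).\<close>
definition is_weyl_symbol :: "(real \<Rightarrow> real \<Rightarrow> complex) \<Rightarrow> (real \<Rightarrow> real \<Rightarrow> complex) \<Rightarrow> bool" where
  "is_weyl_symbol \<sigma> k \<longleftrightarrow>
     (\<forall>f g. schwartz f \<longrightarrow> schwartz g \<longrightarrow>
        cov_pairing k f g =
        complex_of_real (1 / sqrt (2 * pi)) *
          (LINT p|lborel. \<sigma> (fst p) (snd p) * cnj (wigner g f (fst p) (snd p))))"

end

theory Submission
  imports Defs "HOL-Probability.Sinc_Integral"
begin

hide_const (open) Sinc_Integral.sinc



lemma sinc_eq: "Defs.sinc = (\<lambda>x. if x = 0 then 1 else sin x / x)"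
  by (auto simp: Defs.sinc_def)

lemma isCont_dsinc: "isCont Defs.sinc x"
  unfolding sinc_eq by (rule isCont_sinc)

lemma dsinc_measurable[measurable]: "Defs.sinc \<in> borel_measurable borel"
  unfolding sinc_eq by measurable

lemma integrable_D: "integrable lborel (\<lambda>x::real. inverse (1 + x^2))"
proof -
  have "set_integrable lborel (einterval (-\<infinity>) \<infinity>) (\<lambda>x::real. inverse (1 + x^2))"
    by (rule integrable_inverse_1_plus_square)
  then show ?thesis by (simp add: set_integrable_def)
qed

lemma dsinc_abs_le: "\<bar>Defs.sinc x\<bar> \<le> 1"
  by (auto simp: Defs.sinc_def abs_sin_le_one abs_sin_x_le_abs_x divide_le_eq_1 abs_divide)

lemma dsinc_mult: "x * Defs.sinc x = sin x"
  by (auto simp: Defs.sinc_def)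

lemma sinc_sq_le: "(Defs.sinc x)^2 \<le> 2 * inverse (1 + x^2)"
proof -
  have a: "(Defs.sinc x)^2 \<le> 1" using dsinc_abs_le[of x]
    by (metis abs_le_square_iff abs_one one_power2)
  have b: "x^2 * (Defs.sinc x)^2 \<le> 1"
  proof -
    have "(sin x)^2 \<le> 1" by (simp add: abs_square_le_1 abs_sin_le_one)
    then show ?thesis using dsinc_mult[of x] by (metis power_mult_distrib)
  qed
  have "(Defs.sinc x)^2 * (1 + x^2) \<le> 2" using a b by (simp add: algebra_simps)
  moreover have "0 < 1 + x^2" by (simp add: add_pos_nonneg)
  ultimately show ?thesis by (simp add: field_simps)
qed


lemma Si_zero: "Si 0 = 0" by (simp add: Si_def zero_ereal_def[symmetric])

lemma sinc_sq_half:
  "(LBINT x=0..\<infinity>. (Defs.sinc x)^2) = pi / 2"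
proof -
  define F where "F T = Si (2*T) - (sin T)^2 / T" for T :: real
  have deriv: "DERIV F T :> (Defs.sinc T)^2" if "0 < T" for T
  proof -
    have d1: "((\<lambda>T. Si (2*T)) has_real_derivative
        ((if 2*T = 0 then 1 else sin (2*T) / (2*T)) * 2)) (at T)"
      using DERIV_chain2[OF DERIV_Si, of "\<lambda>T. 2*T" 2 T]
      by (auto intro!: derivative_eq_intros)
    have d2: "((\<lambda>T. (sin T)^2 / T) has_real_derivative
        ((2 * sin T * cos T * T - (sin T)^2) / T^2)) (at T)"
      using that by (auto intro!: derivative_eq_intros simp: power2_eq_square field_simps)
    have "DERIV F T :> ((if 2*T = 0 then 1 else sin (2*T) / (2*T)) * 2) - (2 * sin T * cos T * T - (sin T)^2) / T^2"
      unfolding F_def by (rule DERIV_diff[OF d1 d2])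
    moreover have "((if 2*T = 0 then 1 else sin (2*T) / (2*T)) * 2) - (2 * sin T * cos T * T - (sin T)^2) / T^2
        = (Defs.sinc T)^2"
    proof -
      have s2: "sin (2*T) = 2 * sin T * cos T" by (rule sin_double)
      have s3: "sin (T * 2) = cos T * (sin T * 2)" using s2 by (simp add: mult.commute mult.left_commute)
      show ?thesis using that by (simp add: Defs.sinc_def s3 field_simps power2_eq_square)
    qed
    ultimately show ?thesis by simp
  qed
  have lim0: "(F \<longlongrightarrow> 0) (at_right 0)"
  proof -
    have "((\<lambda>T. Si (2*T)) \<longlongrightarrow> Si (2*0)) (at_right 0)"
      by (intro tendsto_intros isCont_tendsto_compose[OF isCont_Si] tendsto_ident_at)
    moreover have "((\<lambda>T. sin T * (sin T / T)) \<longlongrightarrow> sin 0 * 1) (at_right (0::real))"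
      by (intro tendsto_intros tendsto_mono[OF at_within_le_at sinc_at_0])
    ultimately have "((\<lambda>T. Si (2*T) - sin T * (sin T / T)) \<longlongrightarrow> Si (2*0) - sin 0 * 1) (at_right 0)"
      by (rule tendsto_diff)
    moreover have "F = (\<lambda>T. Si (2 * T) - sin T * sin T / T)"
      by (auto simp: F_def power2_eq_square fun_eq_iff)
    ultimately show ?thesis by (simp add: Si_zero)
  qed
  have limtop: "(F \<longlongrightarrow> pi/2) at_top"
  proof -
    have "((\<lambda>T. Si (2*T)) \<longlongrightarrow> pi/2) at_top"
      by (rule filterlim_compose[OF Si_at_top]) (intro filterlim_tendsto_pos_mult_at_top tendsto_const filterlim_ident, auto)
    moreover have "((\<lambda>T::real. (sin T)^2 / T) \<longlongrightarrow> 0) at_top"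
    proof -
      have sq: "(sin x)^2 \<le> 1" for x::real by (simp add: abs_square_le_1 abs_sin_le_one)
      have e1: "\<forall>\<^sub>F n in at_top. - inverse n \<le> (sin n)\<^sup>2 / (n::real)"
        using eventually_gt_at_top[of "0::real"]
      proof (rule eventually_mono)
        fix n :: real assume "0 < n"
        then have "0 \<le> (sin n)\<^sup>2 / n" by simp
        moreover have "- inverse n \<le> 0" using \<open>0 < n\<close> by simp
        ultimately show "- inverse n \<le> (sin n)\<^sup>2 / n" by linarith
      qed
      have e2: "\<forall>\<^sub>F n in at_top. (sin n)\<^sup>2 / n \<le> inverse (n::real)"
        using eventually_gt_at_top[of "0::real"]
      proof (rule eventually_mono)
        fix n :: real assume "0 < n"
        then show "(sin n)\<^sup>2 / n \<le> inverse n"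
          using sq[of n] by (simp add: divide_right_mono inverse_eq_divide)
      qed
      have l1: "((\<lambda>T. - inverse T) \<longlongrightarrow> (0::real)) at_top"
        using tendsto_minus[OF tendsto_inverse_0_at_top[OF filterlim_ident]] by auto
      have l2: "((\<lambda>T. inverse T) \<longlongrightarrow> (0::real)) at_top"
        using tendsto_inverse_0_at_top[OF filterlim_ident] by auto
      note tendsto_sandwich[OF e1 e2 l1 l2]
      then show ?thesis by simp
    qed
    ultimately show ?thesis unfolding F_def by (metis (no_types) diff_zero tendsto_diff)
  qed
  have "(LBINT x=ereal 0..\<infinity>. (Defs.sinc x)^2) = pi/2 - 0"
    apply (rule interval_integral_FTC_nonneg[where F=F])
    using deriv lim0 limtop
    by (auto simp: ereal_tendsto_simps isCont_dsinc intro!: continuous_intros)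
  then show ?thesis by (simp add: zero_ereal_def)
qed


lemma integrable_bound_real:
  fixes g :: "'a \<Rightarrow> 'b::{banach, second_countable_topology}"
  assumes "integrable M f" "g \<in> borel_measurable M" "\<And>x. norm (g x) \<le> (f x :: real)"
  shows "integrable M g"
  by (rule Bochner_Integration.integrable_bound[OF assms(1,2)]) (auto intro!: AE_I2 order_trans[OF assms(3)])

lemma integrable_sinc_sq: "integrable lborel (\<lambda>x. (Defs.sinc x)^2)"
  by (rule integrable_bound_real[OF integrable_mult_right[OF integrable_D, of 2]])
     (auto simp: sinc_sq_le)

lemma dsinc_neg[simp]: "Defs.sinc (- x) = Defs.sinc x"
  by (simp add: Defs.sinc_def)

lemma LBINT_whole: "(LBINT x=-\<infinity>..\<infinity>. f x) = (\<integral>x. f x \<partial>lborel)"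
  by (simp add: interval_lebesgue_integral_def set_lebesgue_integral_def)

lemma integral_sinc_sq: "(\<integral>x. (Defs.sinc x)^2 \<partial>lborel) = pi"
proof -
  let ?f = "\<lambda>x. (Defs.sinc x)^2"
  have int: "interval_lebesgue_integrable lborel (-\<infinity>) \<infinity> ?f"
    using integrable_sinc_sq by (simp add: interval_lebesgue_integrable_def set_integrable_def)
  have "(LBINT x=-\<infinity>..0. ?f x) + (LBINT x=0..\<infinity>. ?f x) = (LBINT x=-\<infinity>..\<infinity>. ?f x)"
    by (rule interval_integral_sum) (use int in simp)
  moreover have "(LBINT x=-\<infinity>..0. ?f x) = (LBINT x=0..\<infinity>. ?f x)"
    by (subst interval_integral_reflect) simp
  ultimately show ?thesis using sinc_sq_half LBINT_whole[of ?f] by simp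
qed


lemma sinc_sq_mult: "(t * Defs.sinc t)^2 = (sin t)^2"
  by (simp add: dsinc_mult)

lemma trig_id: fixes u v :: real shows "(sin u)^2 * cos (2 * v) = ((sin (u+v))^2 + (sin (u-v))^2)/2 - (sin v)^2"
proof -
  have h1: "(sin (u+v))^2 + (sin (u-v))^2 = 2 * ((sin u)^2 * (cos v)^2 + (cos u)^2 * (sin v)^2)"
    by (simp add: sin_add sin_diff power2_eq_square algebra_simps)
  have c2: "cos (2 * v) = (cos v)^2 - (sin v)^2" by (simp add: cos_double)
  have h3: "(cos u)^2 = 1 - (sin u)^2" by (simp add: cos_squared_eq)
  show ?thesis unfolding c2 h1 h3 by (simp add: algebra_simps)
qed

definition EE :: "real \<Rightarrow> real \<Rightarrow> real" where
  "EE c t = c^2 / 2 * (Defs.sinc (c / 2 * t))^2"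

lemma EE_mult: "EE c t * t^2 = 2 * (sin (c * t / 2))^2"
proof -
  have "EE c t * t^2 = 2 * ((c/2*t) * Defs.sinc (c/2*t))^2"
    by (simp add: EE_def power_mult_distrib field_simps)
  also have "\<dots> = 2 * (sin (c/2*t))^2" by (simp only: sinc_sq_mult)
  finally show ?thesis by (simp add: mult.commute)
qed

lemma key_id:
  "x^2 * (Defs.sinc (x*t))^2 * cos (y*t) = (EE (2*x+y) t + EE (2*x-y) t)/4 - EE y t / 2"
proof (cases "t = 0")
  case True then show ?thesis by (simp add: EE_def Defs.sinc_def power2_eq_square field_simps)
next
  case False
  then have t2: "t^2 \<noteq> 0" by simp
  have "x^2 * (Defs.sinc (x*t))^2 * cos (y*t) * t^2 = (sin (x*t))^2 * cos (2 * (y*t/2))"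
    using sinc_sq_mult[of "x*t"] by (simp add: power_mult_distrib algebra_simps)
  also have "\<dots> = ((sin (x*t + y*t/2))^2 + (sin (x*t - y*t/2))^2)/2 - (sin (y*t/2))^2"
    by (rule trig_id)
  also have "\<dots> = ((EE (2*x+y) t + EE (2*x-y) t)/4 - EE y t / 2) * t^2"
  proof -
    have a1: "(2*x+y)*t/2 = x*t + y*t/2" "(2*x-y)*t/2 = x*t - y*t/2" "y*t/2 = y*t/2"
      by (simp_all add: field_simps)
    have e1: "EE (2*x+y) t * t^2 = 2*(sin (x*t + y*t/2))^2"
      using EE_mult[of "2*x+y" t] a1(1) by simp
    have e2: "EE (2*x-y) t * t^2 = 2*(sin (x*t - y*t/2))^2"
      using EE_mult[of "2*x-y" t] a1(2) by simp
    have e3: "EE y t * t^2 = 2*(sin (y*t/2))^2"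
      using EE_mult[of y t] by simp
    have "((EE (2*x+y) t + EE (2*x-y) t)/4 - EE y t / 2) * t^2 =
       (EE (2*x+y) t * t^2)/4 + (EE (2*x-y) t * t^2)/4 - (EE y t * t^2)/2"
      by (simp add: algebra_simps)
    then show ?thesis unfolding e1 e2 e3 by simp
  qed
  finally show ?thesis using t2 by simp
qed


lemma sinc_scaled:
  assumes a: "a \<noteq> 0"
  shows "has_bochner_integral lborel (\<lambda>t. (Defs.sinc (a*t))^2) (pi / \<bar>a\<bar>)"
proof -
  have i: "integrable lborel (\<lambda>t. (Defs.sinc (0 + a*t))^2)"
    by (rule lborel_integrable_real_affine[OF integrable_sinc_sq a])
  have "(\<integral>x. (Defs.sinc x)^2 \<partial>lborel) = \<bar>a\<bar> *\<^sub>R (\<integral>t. (Defs.sinc (0 + a*t))^2 \<partial>lborel)"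
    by (rule lborel_integral_real_affine[OF a])
  then have "(\<integral>t. (Defs.sinc (a*t))^2 \<partial>lborel) = pi / \<bar>a\<bar>"
    using a by (simp add: integral_sinc_sq field_simps)
  then show ?thesis using i by (simp add: has_bochner_integral_iff)
qed

lemma EE_integral: "has_bochner_integral lborel (\<lambda>t. EE c t) (pi * \<bar>c\<bar>)"
proof (cases "c = 0")
  case True
  have "has_bochner_integral lborel (\<lambda>t. 0::real) 0" by (rule has_bochner_integral_zero)
  then show ?thesis using True by (simp add: EE_def)
next
  case False
  then have "has_bochner_integral lborel (\<lambda>t. c^2/2 * (Defs.sinc (c/2*t))^2) (c^2/2 * (pi / \<bar>c/2\<bar>))"
    by (intro has_bochner_integral_mult_right sinc_scaled) simp
  moreover have "c^2/2 * (pi / \<bar>c/2\<bar>) = pi * \<bar>c\<bar>"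
  proof -
    have "c^2 = \<bar>c\<bar> * \<bar>c\<bar>" by (simp add: power2_eq_square)
    then show ?thesis using False by (simp add: field_simps)
  qed
  ultimately show ?thesis by (simp add: EE_def)
qed

lemma EE_integrable: "integrable lborel (EE c)"
  using EE_integral[of c] has_bochner_integral_iff by blast

lemma EE_nonneg: "0 \<le> EE c t" by (simp add: EE_def)

lemma half_EE: "x^2 * (Defs.sinc (x*t))^2 = EE (2*x) t / 2"
  by (simp add: EE_def power2_eq_square)

lemma odd_integral_zero:
  fixes g :: "real \<Rightarrow> real"
  assumes "\<And>t. g (-t) = - g t"
  shows "(\<integral>t. g t \<partial>lborel) = 0"
proof -
  have "(\<integral>t. g t \<partial>lborel) = \<bar>-1\<bar> *\<^sub>R (\<integral>t. g (0 + -1*t) \<partial>lborel)"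
    by (rule lborel_integral_real_affine) simp
  also have "\<dots> = - (\<integral>t. g t \<partial>lborel)" by (simp add: assms)
  finally show ?thesis by simp
qed

lemma K_real:
  "has_bochner_integral lborel (\<lambda>t. 2 * x^2 * (Defs.sinc (x*t))^2 * cos (y*t))
     (pi/2 * (\<bar>2*x+y\<bar> + \<bar>2*x-y\<bar>) - pi * \<bar>y\<bar>)"
proof -
  have "has_bochner_integral lborel (\<lambda>t. 2 * ((EE (2*x+y) t + EE (2*x-y) t)/4 - EE y t / 2))
      (2 * ((pi * \<bar>2*x+y\<bar> + pi * \<bar>2*x-y\<bar>)/4 - pi * \<bar>y\<bar> / 2))"
    by (intro has_bochner_integral_mult_right has_bochner_integral_diff has_bochner_integral_divide
        has_bochner_integral_add EE_integral)
  moreover have "(\<lambda>t. 2 * x^2 * (Defs.sinc (x*t))^2 * cos (y*t)) =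
      (\<lambda>t. 2 * ((EE (2*x+y) t + EE (2*x-y) t)/4 - EE y t / 2))"
  proof (rule ext)
    fix t
    have "2 * x^2 * (Defs.sinc (x*t))^2 * cos (y*t) = 2 * (x^2 * (Defs.sinc (x*t))^2 * cos (y*t))"
      by (simp only: mult.assoc)
    then show "2 * x^2 * (Defs.sinc (x*t))^2 * cos (y*t) = 2 * ((EE (2*x+y) t + EE (2*x-y) t)/4 - EE y t / 2)"
      by (simp only: key_id)
  qed
  moreover have "2 * ((pi * \<bar>2*x+y\<bar> + pi * \<bar>2*x-y\<bar>)/4 - pi * \<bar>y\<bar> / 2) =
      pi/2 * (\<bar>2*x+y\<bar> + \<bar>2*x-y\<bar>) - pi * \<bar>y\<bar>"
    by (simp add: algebra_simps)
  ultimately show ?thesis by (simp only:)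
qed

lemma K_imag:
  "has_bochner_integral lborel (\<lambda>t. 2 * x^2 * (Defs.sinc (x*t))^2 * sin (y*t)) 0"
proof -
  have m: "(\<lambda>t. 2 * x^2 * (Defs.sinc (x*t))^2 * sin (y*t)) \<in> borel_measurable lborel"
    by measurable
  have "integrable lborel (\<lambda>t. 2 * x^2 * (Defs.sinc (x*t))^2 * sin (y*t))"
  proof (rule integrable_bound_real[OF EE_integrable[of "2*x"] m])
    fix t
    have "norm (2 * x^2 * (Defs.sinc (x*t))^2 * sin (y*t)) = EE (2*x) t * \<bar>sin (y*t)\<bar>"
      using half_EE[of x t] EE_nonneg[of "2*x" t] by (simp add: abs_mult)
    also have "\<dots> \<le> EE (2*x) t * 1"
      by (intro mult_left_mono abs_sin_le_one EE_nonneg)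
    finally show "norm (2 * x^2 * (Defs.sinc (x*t))^2 * sin (y*t)) \<le> EE (2*x) t" by simp
  qed
  moreover have "(\<integral>t. 2 * x^2 * (Defs.sinc (x*t))^2 * sin (y*t) \<partial>lborel) = 0"
    by (rule odd_integral_zero) simp
  ultimately show ?thesis by (simp add: has_bochner_integral_iff)
qed

lemma K_complex:
  "has_bochner_integral lborel (\<lambda>t. complex_of_real (2 * x^2 * (Defs.sinc (x*t))^2) * cis (y*t))
     (complex_of_real (pi/2 * (\<bar>2*x+y\<bar> + \<bar>2*x-y\<bar>) - pi * \<bar>y\<bar>))"
proof -
  have "has_bochner_integral lborel (\<lambda>t. complex_of_real (2 * x^2 * (Defs.sinc (x*t))^2 * cos (y*t)) +
        \<i> * complex_of_real (2 * x^2 * (Defs.sinc (x*t))^2 * sin (y*t)))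
     (complex_of_real (pi/2 * (\<bar>2*x+y\<bar> + \<bar>2*x-y\<bar>) - pi * \<bar>y\<bar>) + \<i> * complex_of_real 0)"
    by (intro has_bochner_integral_add has_bochner_integral_mult_right
          has_bochner_integral_of_real K_real K_imag)
  moreover have "\<And>t. complex_of_real (2 * x^2 * (Defs.sinc (x*t))^2 * cos (y*t)) +
        \<i> * complex_of_real (2 * x^2 * (Defs.sinc (x*t))^2 * sin (y*t)) =
        complex_of_real (2 * x^2 * (Defs.sinc (x*t))^2) * cis (y*t)"
    by (simp add: cis_conv_exp Euler algebra_simps) 
  ultimately show ?thesis by simp
qed

lemma K_pos:
  assumes "0 \<le> x"
  shows "pi/2 * (\<bar>2*x+y\<bar> + \<bar>2*x-y\<bar>) - pi * \<bar>y\<bar> = 2 * pi * max 0 (x - \<bar>y\<bar>/2)"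
proof -
  have "\<bar>2*x+y\<bar> + \<bar>2*x-y\<bar> = 2 * max (2*x) \<bar>y\<bar>" using assms by (simp add: abs_if max_def)
  then show ?thesis by (simp add: max_def algebra_simps)
qed


definition Dw :: "real \<Rightarrow> real" where "Dw t = inverse (1 + t^2)"

lemma pos1: "0 < 1 + (t::real)^2" by (metis add_pos_nonneg zero_le_power2 zero_less_one)
lemma Dw_pos: "0 < Dw t" using pos1[of t] by (simp add: Dw_def)
lemma Dw_nonneg: "0 \<le> Dw t" using Dw_pos[of t] by simp
lemma Dw_le1: "Dw t \<le> 1" using le_imp_inverse_le[of 1 "1+t^2"] by (simp add: Dw_def)
lemma Dw_mult: "(1 + t^2) * Dw t = 1"
  using pos1[of t] by (simp add: Dw_def field_simps)
lemma Dw_abs: "\<bar>t\<bar> * Dw t \<le> 1"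
proof -
  have "0 \<le> (\<bar>t\<bar> - 1)^2" by simp
  then have "2 * \<bar>t\<bar> \<le> 1 + \<bar>t\<bar>^2" by (simp add: power2_eq_square algebra_simps)
  then have "\<bar>t\<bar> \<le> 1 + t^2" by simp
  then have "\<bar>t\<bar> * Dw t \<le> (1 + t^2) * Dw t" by (intro mult_right_mono Dw_nonneg)
  then show ?thesis by (simp add: Dw_mult)
qed
lemma Dw_measurable[measurable]: "Dw \<in> borel_measurable borel"
  unfolding Dw_def[abs_def] by measurable
lemma integrable_Dw: "integrable lborel Dw"
  using integrable_D by (simp add: Dw_def[abs_def])

lemma Dw_compare: assumes "1 + s \<le> (1 + a^2) * (1 + b^2)" "0 \<le> s"
  shows "Dw a * Dw b \<le> inverse (1 + s)"
proof -
  have "Dw a * Dw b = inverse ((1 + a^2) * (1 + b^2))" by (simp add: Dw_def)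
  also have "\<dots> \<le> inverse (1 + s)" using assms by (intro le_imp_inverse_le) auto
  finally show ?thesis .
qed

lemma Dw_P1: "Dw (x + y/2) * Dw (x - y/2) \<le> Dw x"
proof -
  have e: "(1 + (x + y/2)^2) * (1 + (x - y/2)^2) = 1 + x^2 + (x^2 + y^2/2 + ((x + y/2)*(x - y/2))^2)"
    by (simp add: power2_eq_square algebra_simps)
  have "1 + x^2 \<le> (1 + (x + y/2)^2) * (1 + (x - y/2)^2)" unfolding e by simp
  then show ?thesis using Dw_compare[of "x^2"] by (simp add: Dw_def)
qed

lemma Dw_P2: "Dw (x + y/2) * Dw (x - y/2) \<le> 2 * Dw y"
proof -
  have e: "(1 + (x + y/2)^2) * (1 + (x - y/2)^2) = 1 + y^2/2 + (2*x^2 + ((x + y/2)*(x - y/2))^2)"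
    by (simp add: power2_eq_square algebra_simps)
  have "1 + y^2/2 \<le> (1 + (x + y/2)^2) * (1 + (x - y/2)^2)" unfolding e by simp
  then have "Dw (x + y/2) * Dw (x - y/2) \<le> inverse (1 + y^2/2)"
    by (intro Dw_compare) auto
  also have "\<dots> \<le> 2 * Dw y" by (simp add: Dw_def field_simps add_pos_nonneg)
  finally show ?thesis .
qed

lemma Dw_P4: "Dw (2*x - b) * Dw b \<le> Dw x"
proof -
  have e: "(1 + (2*x - b)^2) * (1 + b^2) = 1 + x^2 + (x^2 + 2*(x-b)^2 + ((2*x - b)*b)^2)"
    by (simp add: power2_eq_square algebra_simps)
  have "1 + x^2 \<le> (1 + (2*x - b)^2) * (1 + b^2)" unfolding e by simp
  then show ?thesis using Dw_compare[of "x^2"] by (simp add: Dw_def)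
qed

lemma schwartz_props:
  assumes "schwartz f"
  shows "continuous_on UNIV f" "\<exists>C\<ge>0. \<forall>t. norm (f t) \<le> C * Dw t ^ 3"
proof -
  have n0: "nderiv 0 f = f" by (simp add: nderiv_def)
  have "\<forall>x. f differentiable (at x)" using assms n0 unfolding schwartz_def by metis
  then show "continuous_on UNIV f"
    by (simp add: continuous_at_imp_continuous_on differentiable_imp_continuous_within)
  have b0: "bounded (range (\<lambda>x. complex_of_real (x ^ 0) * nderiv 0 f x))"
    and b6: "bounded (range (\<lambda>x. complex_of_real (x ^ 6) * nderiv 0 f x))"
    using assms unfolding schwartz_def by blast+
  obtain B0 where B0: "\<And>x. norm (f x) \<le> B0" using b0 n0 by (auto simp: bounded_iff)
  obtain B6 where B6': "\<And>x. \<bar>x\<bar>^6 * norm (f x) \<le> B6" using b6 n0 by (auto simp: bounded_iff norm_mult norm_power)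
  have B6: "\<bar>x^6\<bar> * norm (f x) \<le> B6" for x using B6'[of x] by (simp add: power_abs)
  have B0n: "0 \<le> B0" using B0[of 0] norm_ge_zero order_trans by blast
  show "\<exists>C\<ge>0. \<forall>t. norm (f t) \<le> C * Dw t ^ 3"
  proof (intro exI[of _ "4 * (B0 + B6)"] conjI allI)
    show "0 \<le> 4 * (B0 + B6)" using B6[of 0] B0n by simp
    fix t :: real
    have p: "(1 + t^2)^3 \<le> 4 * (1 + t^6)"
    proof -
      have e: "4 * (1 + t^6) - (1 + t^2)^3 = 3 * ((t^2 - 1)^2 * (t^2 + 1))"
        by (simp add: power2_eq_square power3_eq_cube algebra_simps numeral_eq_Suc)
      have "0 \<le> 3 * ((t^2 - 1)^2 * (t^2 + 1))" by simp
      then show ?thesis using e by linarith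
    qed
    have "(1 + t^2)^3 * norm (f t) \<le> 4 * (1 + t^6) * norm (f t)"
      by (intro mult_right_mono p) simp
    also have "\<dots> = 4 * (norm (f t) + \<bar>t^6\<bar> * norm (f t))" by (simp add: algebra_simps)
    also have "\<dots> \<le> 4 * (B0 + B6)" using B0[of t] B6[of t] by simp
    finally have *: "(1 + t^2)^3 * norm (f t) \<le> 4 * (B0 + B6)" .
    have "norm (f t) = (1 + t^2)^3 * norm (f t) * Dw t ^ 3"
      using Dw_mult[of t] by (simp add: power_mult_distrib[symmetric] mult.commute mult.left_commute)
    also have "\<dots> \<le> 4 * (B0 + B6) * Dw t ^ 3" by (intro mult_right_mono * ) (simp add: Dw_nonneg)
    finally show "norm (f t) \<le> 4 * (B0 + B6) * Dw t ^ 3" .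
  qed
qed

lemma (in pair_sigma_finite) integrable_product_mult:
  fixes u v :: "_ \<Rightarrow> real"
  assumes u: "integrable M1 u" and v: "integrable M2 v"
  shows "integrable (M1 \<Otimes>\<^sub>M M2) (\<lambda>p. u (fst p) * v (snd p))"
proof -
  have [measurable]: "u \<in> borel_measurable M1" "v \<in> borel_measurable M2"
    using u v by auto
  have "(\<integral>\<^sup>+p. ennreal (norm (u (fst p) * v (snd p))) \<partial>(M1 \<Otimes>\<^sub>M M2))
      = (\<integral>\<^sup>+x. \<integral>\<^sup>+y. ennreal (norm (u x)) * ennreal (norm (v y)) \<partial>M2 \<partial>M1)"
    by (subst M2.nn_integral_fst[symmetric]) (auto intro!: nn_integral_cong simp: abs_mult ennreal_mult)
  also have "\<dots> = (\<integral>\<^sup>+x. ennreal (norm (u x)) * (\<integral>\<^sup>+y. ennreal (norm (v y)) \<partial>M2) \<partial>M1)"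
    by (subst nn_integral_cmult) auto
  also have "\<dots> = (\<integral>\<^sup>+x. ennreal (norm (u x)) \<partial>M1) * (\<integral>\<^sup>+y. ennreal (norm (v y)) \<partial>M2)"
    by (subst nn_integral_multc) auto
  also have "\<dots> < \<infinity>" using u v by (auto simp: integrable_iff_bounded ennreal_mult_less_top)
  finally show ?thesis by (auto simp: integrable_iff_bounded)
qed

lemma integrable_lborel_prod_bound:
  fixes F :: "real \<times> real \<Rightarrow> 'b::{banach, second_countable_topology}"
  assumes u: "integrable lborel u" and v: "integrable lborel v"
    and F: "F \<in> borel_measurable (lborel \<Otimes>\<^sub>M lborel)"
    and b: "\<And>a b. norm (F (a,b)) \<le> u a * v b"
  shows "integrable (lborel \<Otimes>\<^sub>M lborel) F"
  by (rule integrable_bound_real[OF lborel_pair.integrable_product_mult[OF u v] F])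
     (use b in auto)


lemma mm: "0 \<le> a \<Longrightarrow> a \<le> b \<Longrightarrow> 0 \<le> c \<Longrightarrow> c \<le> (d::real) \<Longrightarrow> a * c \<le> b * d"
  by (rule mult_mono) auto

lemma R1: "(Dw (x + y/2) * Dw (x - y/2))^3 \<le> Dw x * Dw x * (2 * Dw y)"
proof -
  have "(Dw (x + y/2) * Dw (x - y/2))^3 =
     (Dw (x + y/2) * Dw (x - y/2)) * (Dw (x + y/2) * Dw (x - y/2)) * (Dw (x + y/2) * Dw (x - y/2))"
    by (simp add: power3_eq_cube)
  also have "\<dots> \<le> Dw x * Dw x * (2 * Dw y)"
    by (intro mm Dw_P1 Dw_P2 mult_nonneg_nonneg Dw_nonneg)
  finally show ?thesis .
qed

lemma R2: "\<bar>x + y/2\<bar> * Dw (x + y/2)^3 * Dw (x - y/2)^3 \<le> 1 * Dw x * (2 * Dw y) * 1"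
proof -
  have "\<bar>x + y/2\<bar> * Dw (x + y/2)^3 * Dw (x - y/2)^3 =
     (\<bar>x + y/2\<bar> * Dw (x + y/2)) * (Dw (x + y/2) * Dw (x - y/2)) * (Dw (x + y/2) * Dw (x - y/2)) * Dw (x - y/2)"
    by (simp add: power3_eq_cube)
  also have "\<dots> \<le> 1 * Dw x * (2 * Dw y) * 1"
    by (intro mm Dw_P1 Dw_P2 Dw_abs Dw_le1 mult_nonneg_nonneg Dw_nonneg abs_ge_zero)
  finally show ?thesis .
qed

lemma R3: "\<bar>2*x - b\<bar> * Dw (2*x - b)^3 * Dw b^3 \<le> 1 * Dw x * 1 * Dw b * 1"
proof -
  have "\<bar>2*x - b\<bar> * Dw (2*x - b)^3 * Dw b^3 =
     (\<bar>2*x - b\<bar> * Dw (2*x - b)) * (Dw (2*x - b) * Dw b) * Dw (2*x - b) * Dw b * Dw b"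
    by (simp add: power3_eq_cube)
  also have "\<dots> \<le> 1 * Dw x * 1 * Dw b * 1"
    by (intro mm Dw_P4 Dw_abs Dw_le1 mult_nonneg_nonneg Dw_nonneg abs_ge_zero order_refl)
  finally show ?thesis .
qed

lemma R4: "\<bar>a\<bar> * Dw a^3 * Dw b^3 \<le> 1 * Dw a * 1 * Dw b * 1 * 1"
proof -
  have "\<bar>a\<bar> * Dw a^3 * Dw b^3 = (\<bar>a\<bar> * Dw a) * Dw a * Dw a * Dw b * Dw b * Dw b"
    by (simp add: power3_eq_cube)
  also have "\<dots> \<le> 1 * Dw a * 1 * Dw b * 1 * 1"
    by (intro mm Dw_abs Dw_le1 mult_nonneg_nonneg Dw_nonneg abs_ge_zero order_refl)
  finally show ?thesis .
qed

lemma sigma_bound: "x^2 * (Defs.sinc (x*t))^2 \<le> (1 + x^2) * Dw t"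
proof -
  have a: "x^2 * (Defs.sinc (x*t))^2 \<le> x^2"
  proof -
    have "(Defs.sinc (x*t))^2 \<le> 1" using dsinc_abs_le[of "x*t"] by (simp add: abs_square_le_1)
    from mult_left_mono[OF this, of "x^2"] show ?thesis by simp
  qed
  have b: "t^2 * (x^2 * (Defs.sinc (x*t))^2) \<le> 1"
  proof -
    have "t^2 * (x^2 * (Defs.sinc (x*t))^2) = (sin (x*t))^2"
      using sinc_sq_mult[of "x*t"] by (simp add: power_mult_distrib mult_ac)
    then show ?thesis by (simp add: abs_square_le_1 abs_sin_le_one)
  qed
  have "x^2 * (Defs.sinc (x*t))^2 * (1 + t^2) \<le> 1 + x^2" using a b by (simp add: algebra_simps)
  then have "x^2 * (Defs.sinc (x*t))^2 * (1 + t^2) * Dw t \<le> (1 + x^2) * Dw t"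
    by (intro mult_right_mono Dw_nonneg)
  moreover have "x^2 * (Defs.sinc (x*t))^2 * (1 + t^2) * Dw t = x^2 * (Defs.sinc (x*t))^2"
    using Dw_mult[of t] by (simp only: mult.assoc)
  ultimately show ?thesis by simp
qed

lemma kb_bound: "norm (kb a b) \<le> \<bar>a\<bar>"
  by (auto simp: kb_def min_def)

lemma kb_shift: "kb (x + y/2) (x - y/2) = complex_of_real (if 0 \<le> x then max 0 (x - \<bar>y\<bar>/2) else 0)"
  by (auto simp: kb_def min_def max_def abs_if)


lemma cont_cis: "continuous_on UNIV cis" by (intro continuous_intros)
lemma cont_cnj: "continuous_on UNIV (cnj::complex\<Rightarrow>complex)" by (intro continuous_intros)

lemma lborel_prod_real: "lborel \<Otimes>\<^sub>M lborel = (lborel :: (real \<times> real) measure)"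
  by (rule lborel_prod)

theorem mainTheorem14:
  shows "is_weyl_symbol
           (\<lambda>x \<xi>. complex_of_real (2 * x\<^sup>2 * (sinc (x * \<xi>))\<^sup>2 * heaviside x)) kb"
  unfolding is_weyl_symbol_def
proof (intro allI impI)
  fix f g :: "real \<Rightarrow> complex"
  assume sf: "schwartz f" and sg: "schwartz g"
  obtain Cf where Cf: "0 \<le> Cf" "\<And>t. norm (f t) \<le> Cf * Dw t ^ 3" using schwartz_props(2)[OF sf] by blast
  obtain Cg where Cg: "0 \<le> Cg" "\<And>t. norm (g t) \<le> Cg * Dw t ^ 3" using schwartz_props(2)[OF sg] by blast
  have cf: "continuous_on UNIV f" by (rule schwartz_props(1)[OF sf])
  have cg: "continuous_on UNIV g" by (rule schwartz_props(1)[OF sg])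
  note [measurable] = borel_measurable_continuous_on[OF cf] borel_measurable_continuous_on[OF cg]
    borel_measurable_continuous_on[OF cont_cis] borel_measurable_continuous_on[OF cont_cnj]
  define C where "C = Cg * Cf"
  have C0: "0 \<le> C" using Cf Cg by (simp add: C_def)
  define \<sigma> where "\<sigma> x \<xi> = complex_of_real (2 * x\<^sup>2 * (sinc (x * \<xi>))\<^sup>2 * heaviside x)" for x \<xi>
  define Q where "Q x y = cnj (g (x + y/2)) * f (x - y/2)" for x y
  define H where "H p y = \<sigma> (fst p) (snd p) * (Q (fst p) y * cis (y * snd p))" for p :: "real \<times> real" and y :: real
  define \<Phi> where "\<Phi> a b = kb a b * cnj (g a) * f b" for a b
  define c0 where "c0 = complex_of_real (1 / sqrt (2 * pi))"

  have Qb: "norm (Q x y) \<le> C * (Dw (x + y/2) * Dw (x - y/2))^3" for x y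
  proof -
    have "norm (Q x y) = norm (g (x+y/2)) * norm (f (x-y/2))" by (simp add: Q_def norm_mult)
    also have "\<dots> \<le> (Cg * Dw (x+y/2)^3) * (Cf * Dw (x-y/2)^3)"
      by (intro mult_mono Cg Cf) (auto simp: Cg(1) Dw_nonneg)
    also have "\<dots> = C * (Dw (x + y/2) * Dw (x - y/2))^3" by (simp add: C_def power_mult_distrib mult_ac)
    finally show ?thesis .
  qed
  have \<Phi>b: "norm (\<Phi> a b) \<le> C * (\<bar>a\<bar> * Dw a^3 * Dw b^3)" for a b
  proof -
    have "norm (\<Phi> a b) = norm (kb a b) * norm (g a) * norm (f b)" by (simp add: \<Phi>_def norm_mult)
    also have "\<dots> \<le> \<bar>a\<bar> * (Cg * Dw a^3) * (Cf * Dw b^3)"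
      by (intro mult_mono kb_bound Cg Cf) (auto simp: Cg(1) Cf(1) Dw_nonneg)
    also have "\<dots> = C * (\<bar>a\<bar> * Dw a^3 * Dw b^3)" by (simp add: C_def mult_ac)
    finally show ?thesis .
  qed
  have \<sigma>b: "norm (\<sigma> x \<xi>) \<le> 2 * ((1 + x^2) * Dw \<xi>)" for x \<xi>
  proof -
    have "norm (\<sigma> x \<xi>) = \<bar>2 * x\<^sup>2 * (sinc (x * \<xi>))\<^sup>2 * heaviside x\<bar>"
      unfolding \<sigma>_def by (rule norm_of_real)
    also have "\<dots> = 2 * (x^2 * (sinc (x * \<xi>))^2) * heaviside x"
      by (simp add: heaviside_def)
    also have "\<dots> \<le> 2 * (x^2 * (sinc (x * \<xi>))^2)" by (simp add: heaviside_def)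
    also have "\<dots> \<le> 2 * ((1 + x^2) * Dw \<xi>)" using sigma_bound[of x \<xi>] by simp
    finally show ?thesis .
  qed
  have Hb: "norm (H (x,\<xi>) y) \<le> (4*C * Dw x * Dw \<xi>) * Dw y" for x \<xi> y
  proof -
    have "norm (H (x,\<xi>) y) = norm (\<sigma> x \<xi>) * norm (Q x y)" by (simp add: H_def norm_mult)
    also have "\<dots> \<le> (2 * ((1 + x^2) * Dw \<xi>)) * (C * (Dw x * Dw x * (2 * Dw y)))"
      by (intro mult_mono \<sigma>b order_trans[OF Qb] mult_left_mono R1 C0) (auto simp: Dw_nonneg C0)
    also have "\<dots> = 4 * C * ((1 + x^2) * Dw x) * Dw x * Dw \<xi> * Dw y" by (simp add: mult_ac)
    also have "\<dots> = (4*C * Dw x * Dw \<xi>) * Dw y" by (simp add: Dw_mult)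
    finally show ?thesis .
  qed
  have \<Phi>1b: "norm (\<Phi> (x + y/2) (x - y/2)) \<le> (2*C * Dw x) * Dw y" for x y
  proof -
    have "norm (\<Phi> (x + y/2) (x - y/2)) \<le> C * (1 * Dw x * (2 * Dw y) * 1)"
      by (rule order_trans[OF \<Phi>b mult_left_mono[OF R2 C0]])
    then show ?thesis by (simp add: mult_ac)
  qed
  have \<Phi>2b: "norm (\<Phi> (2*x - b) b) \<le> (C * Dw x) * Dw b" for x b
  proof -
    have "norm (\<Phi> (2*x - b) b) \<le> C * (1 * Dw x * 1 * Dw b * 1)"
      by (rule order_trans[OF \<Phi>b mult_left_mono[OF R3 C0]])
    then show ?thesis by (simp add: mult_ac)
  qed
  have \<Phi>3b: "norm (\<Phi> a b) \<le> (C * Dw a) * Dw b" for a b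
  proof -
    have "norm (\<Phi> a b) \<le> C * (1 * Dw a * 1 * Dw b * 1 * 1)"
      by (rule order_trans[OF \<Phi>b mult_left_mono[OF R4 C0]])
    then show ?thesis by (simp add: mult_ac)
  qed

  have iDw2: "integrable lborel (\<lambda>p::real\<times>real. (K * Dw (fst p)) * Dw (snd p))" for K
  proof -
    have "integrable (lborel \<Otimes>\<^sub>M lborel) (\<lambda>p::real\<times>real. (K * Dw (fst p)) * Dw (snd p))"
      by (intro lborel_pair.integrable_product_mult integrable_mult_right integrable_Dw)
    then show ?thesis by (simp only: lborel_prod_real)
  qed
  have intH: "integrable (lborel \<Otimes>\<^sub>M lborel) (\<lambda>(p::real\<times>real, y::real). H p y)"
  proof (rule integrable_bound_real[OF lborel_pair.integrable_product_mult[OF iDw2[of "4*C"] integrable_Dw]])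
    have "(\<lambda>(p::real\<times>real, y::real). H p y) \<in> borel_measurable ((lborel \<Otimes>\<^sub>M lborel) \<Otimes>\<^sub>M lborel)"
      unfolding H_def \<sigma>_def Q_def heaviside_def split_beta by measurable
    then show "(\<lambda>(p::real\<times>real, y::real). H p y) \<in> borel_measurable (lborel \<Otimes>\<^sub>M lborel)"
      by (simp only: lborel_prod_real)
    fix z :: "(real \<times> real) \<times> real"
    obtain x \<xi> y where z: "z = ((x, \<xi>), y)" by (metis prod.collapse)
    show "norm ((\<lambda>(p, y). H p y) z) \<le> 4 * C * Dw (fst (fst z)) * Dw (snd (fst z)) * Dw (snd z)"
      using Hb[of x \<xi> y] by (simp add: z)
  qed
  have intHy: "integrable (lborel \<Otimes>\<^sub>M lborel) (\<lambda>(x, \<xi>). H (x, \<xi>) y)" for y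
  proof (rule integrable_lborel_prod_bound[OF integrable_mult_right[OF integrable_Dw, of "4*C*Dw y"] integrable_Dw])
    show "(\<lambda>(x, \<xi>). H (x, \<xi>) y) \<in> borel_measurable (lborel \<Otimes>\<^sub>M lborel)"
      unfolding H_def \<sigma>_def Q_def heaviside_def split_beta by measurable
    fix a b
    show "norm ((\<lambda>(x, \<xi>). H (x, \<xi>) y) (a, b)) \<le> 4 * C * Dw y * Dw a * Dw b"
      using Hb[of a b y] by (simp add: mult_ac)
  qed
  have int\<Phi>1: "integrable (lborel \<Otimes>\<^sub>M lborel) (\<lambda>(x, y). \<Phi> (x + y/2) (x - y/2))"
  proof (rule integrable_lborel_prod_bound[OF integrable_mult_right[OF integrable_Dw, of "2*C"] integrable_Dw])
    show "(\<lambda>(x, y). \<Phi> (x + y/2) (x - y/2)) \<in> borel_measurable (lborel \<Otimes>\<^sub>M lborel)"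
      unfolding \<Phi>_def kb_def split_beta by measurable
    fix a b show "norm ((\<lambda>(x, y). \<Phi> (x + y/2) (x - y/2)) (a, b)) \<le> 2 * C * Dw a * Dw b"
      using \<Phi>1b[of a b] by simp
  qed
  have int\<Phi>2: "integrable (lborel \<Otimes>\<^sub>M lborel) (\<lambda>(x, b). \<Phi> (2*x - b) b)"
  proof (rule integrable_lborel_prod_bound[OF integrable_mult_right[OF integrable_Dw, of "C"] integrable_Dw])
    show "(\<lambda>(x, b). \<Phi> (2*x - b) b) \<in> borel_measurable (lborel \<Otimes>\<^sub>M lborel)"
      unfolding \<Phi>_def kb_def split_beta by measurable
    fix a b show "norm ((\<lambda>(x, b). \<Phi> (2*x - b) b) (a, b)) \<le> C * Dw a * Dw b"
      using \<Phi>2b[of a b] by simp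
  qed
  have int\<Phi>3: "integrable (lborel \<Otimes>\<^sub>M lborel) (\<lambda>(a, b). \<Phi> a b)"
  proof (rule integrable_lborel_prod_bound[OF integrable_mult_right[OF integrable_Dw, of "C"] integrable_Dw])
    show "(\<lambda>(a, b). \<Phi> a b) \<in> borel_measurable (lborel \<Otimes>\<^sub>M lborel)"
      unfolding \<Phi>_def kb_def split_beta by measurable
    fix a b show "norm ((\<lambda>(a, b). \<Phi> a b) (a, b)) \<le> C * Dw a * Dw b"
      using \<Phi>3b[of a b] by simp
  qed
  have wig: "\<sigma> (fst p) (snd p) * cnj (wigner g f (fst p) (snd p)) = c0 * (\<integral>y. H p y \<partial>lborel)" for p
  proof -
    have "cnj (wigner g f (fst p) (snd p)) = c0 * (\<integral>y. Q (fst p) y * cis (y * snd p) \<partial>lborel)"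
    proof -
      have e: "cnj (\<integral>y. g (fst p + y / 2) * cnj (f (fst p - y / 2)) * cis (- (y * snd p)) \<partial>lborel)
         = (\<integral>y. cnj (g (fst p + y / 2) * cnj (f (fst p - y / 2)) * cis (- (y * snd p))) \<partial>lborel)"
        by (rule Bochner_Integration.integral_cnj[symmetric])
      show ?thesis unfolding wigner_def c0_def Q_def by (simp add: e cis_cnj)
    qed
    moreover have "(\<integral>y. H p y \<partial>lborel) = \<sigma> (fst p) (snd p) * (\<integral>y. Q (fst p) y * cis (y * snd p) \<partial>lborel)"
      unfolding H_def by (rule integral_mult_right_zero)
    ultimately show ?thesis by (simp only: mult.left_commute)
  qed
  have inner: "(\<integral>\<xi>. H (x, \<xi>) y \<partial>lborel) = complex_of_real (2*pi) * \<Phi> (x + y/2) (x - y/2)" for x y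
  proof -
    have "(\<integral>\<xi>. H (x, \<xi>) y \<partial>lborel) = Q x y * (\<integral>\<xi>. \<sigma> x \<xi> * cis (y * \<xi>) \<partial>lborel)"
      by (simp add: H_def mult_ac)
    also have "(\<integral>\<xi>. \<sigma> x \<xi> * cis (y * \<xi>) \<partial>lborel) = complex_of_real (2*pi) * kb (x + y/2) (x - y/2)"
    proof (cases "0 \<le> x")
      case True
      have "(\<integral>\<xi>. \<sigma> x \<xi> * cis (y * \<xi>) \<partial>lborel) =
          (\<integral>t. complex_of_real (2 * x^2 * (sinc (x*t))^2) * cis (y*t) \<partial>lborel)"
        using True by (simp add: \<sigma>_def heaviside_def)
      also have "\<dots> = complex_of_real (pi/2 * (\<bar>2*x+y\<bar> + \<bar>2*x-y\<bar>) - pi * \<bar>y\<bar>)"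
        using K_complex[of x y] by (simp add: has_bochner_integral_iff)
      also have "\<dots> = complex_of_real (2*pi) * kb (x + y/2) (x - y/2)"
      proof -
        have "complex_of_real (2*pi) * kb (x + y/2) (x - y/2) = complex_of_real (2*pi * max 0 (x - \<bar>y\<bar>/2))"
          using True by (simp only: kb_shift if_True of_real_mult)
        then show ?thesis by (simp only: K_pos[OF True])
      qed
      finally show ?thesis .
    next
      case False
      then show ?thesis by (simp add: \<sigma>_def heaviside_def kb_shift)
    qed
    finally show ?thesis by (simp add: \<Phi>_def Q_def mult_ac)
  qed
  have step1: "(\<integral>p. \<integral>y. H p y \<partial>lborel \<partial>lborel) =
      complex_of_real (2*pi) * (\<integral>y. \<integral>x. \<Phi> (x + y/2) (x - y/2) \<partial>lborel \<partial>lborel)"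
  proof -
    have "(\<integral>p. \<integral>y. H p y \<partial>lborel \<partial>lborel) = (\<integral>y. \<integral>p. H p y \<partial>(lborel::(real\<times>real) measure) \<partial>lborel)"
      using lborel_pair.Fubini_integral[OF intH] by simp
    also have "\<dots> = (\<integral>y. \<integral>x. \<integral>\<xi>. H (x, \<xi>) y \<partial>lborel \<partial>lborel \<partial>lborel)"
    proof (rule Bochner_Integration.integral_cong[OF refl])
      fix y :: real
      have "(\<integral>x. \<integral>\<xi>. H (x, \<xi>) y \<partial>lborel \<partial>lborel) = integral\<^sup>L (lborel \<Otimes>\<^sub>M lborel) (\<lambda>(x, \<xi>). H (x, \<xi>) y)"
        by (rule lborel_pair.integral_fst[OF intHy])
      also have "\<dots> = (\<integral>p. H p y \<partial>lborel)"
        by (simp add: lborel_prod_real split_beta')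
      finally show "(\<integral>p. H p y \<partial>lborel) = (\<integral>x. \<integral>\<xi>. H (x, \<xi>) y \<partial>lborel \<partial>lborel)" by simp
    qed
    also have "\<dots> = (\<integral>y. \<integral>x. complex_of_real (2*pi) * \<Phi> (x + y/2) (x - y/2) \<partial>lborel \<partial>lborel)"
      by (simp only: inner)
    also have "\<dots> = complex_of_real (2*pi) * (\<integral>y. \<integral>x. \<Phi> (x + y/2) (x - y/2) \<partial>lborel \<partial>lborel)"
      by simp
    finally show ?thesis .
  qed
  have step2: "(\<integral>y. \<integral>x. \<Phi> (x + y/2) (x - y/2) \<partial>lborel \<partial>lborel) = integral\<^sup>L (lborel \<Otimes>\<^sub>M lborel) (\<lambda>(a, b). \<Phi> a b)"
  proof -
    have "(\<integral>y. \<integral>x. \<Phi> (x + y/2) (x - y/2) \<partial>lborel \<partial>lborel) = (\<integral>x. \<integral>y. \<Phi> (x + y/2) (x - y/2) \<partial>lborel \<partial>lborel)"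
      using lborel_pair.Fubini_integral[OF int\<Phi>1] by simp
    also have "\<dots> = (\<integral>x. 2 * (\<integral>b. \<Phi> (2*x - b) b \<partial>lborel) \<partial>lborel)"
    proof (rule Bochner_Integration.integral_cong[OF refl])
      fix x :: real
      have "(\<integral>y. \<Phi> (x + y/2) (x - y/2) \<partial>lborel) = \<bar>-2\<bar> *\<^sub>R (\<integral>b. \<Phi> (x + (2*x + -2*b)/2) (x - (2*x + -2*b)/2) \<partial>lborel)"
        by (rule lborel_integral_real_affine) simp
      also have "\<dots> = 2 * (\<integral>b. \<Phi> (2*x - b) b \<partial>lborel)"
      proof -
        have e1: "\<And>b. x + (2*x + -2*b)/2 = 2*x - b" "\<And>b. x - (2*x + -2*b)/2 = b" by (simp_all add: field_simps)
        show ?thesis by (simp only: e1 scaleR_conv_of_real) simp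
      qed
      finally show "(\<integral>y. \<Phi> (x + y/2) (x - y/2) \<partial>lborel) = 2 * (\<integral>b. \<Phi> (2*x - b) b \<partial>lborel)" .
    qed
    also have "\<dots> = 2 * (\<integral>x. \<integral>b. \<Phi> (2*x - b) b \<partial>lborel \<partial>lborel)" by simp
    also have "(\<integral>x. \<integral>b. \<Phi> (2*x - b) b \<partial>lborel \<partial>lborel) = (\<integral>b. \<integral>x. \<Phi> (2*x - b) b \<partial>lborel \<partial>lborel)"
      using lborel_pair.Fubini_integral[OF int\<Phi>2] by simp
    also have "2 * \<dots> = (\<integral>b. \<integral>a. \<Phi> a b \<partial>lborel \<partial>lborel)"
    proof -
      have "(\<integral>a. \<Phi> a b \<partial>lborel) = 2 * (\<integral>x. \<Phi> (2*x - b) b \<partial>lborel)" for b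
      proof -
        have "(\<integral>a. \<Phi> a b \<partial>lborel) = \<bar>2\<bar> *\<^sub>R (\<integral>x. \<Phi> (-b + 2*x) b \<partial>lborel)"
          by (rule lborel_integral_real_affine) simp
        then show ?thesis by (simp add: scaleR_conv_of_real)
      qed
      then show ?thesis by simp
    qed
    also have "\<dots> = integral\<^sup>L (lborel \<Otimes>\<^sub>M lborel) (\<lambda>(a, b). \<Phi> a b)"
      by (rule lborel_pair.integral_snd[OF int\<Phi>3])
    finally show ?thesis .
  qed
  have lhs: "cov_pairing kb f g = integral\<^sup>L (lborel \<Otimes>\<^sub>M lborel) (\<lambda>(a, b). \<Phi> a b)"
    unfolding cov_pairing_def \<Phi>_def by (simp add: lborel_prod_real split_beta')
  have c0sq: "c0 * c0 * complex_of_real (2*pi) = 1"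
    unfolding c0_def by (simp flip: of_real_mult)
  have "c0 * (LINT p|lborel. \<sigma> (fst p) (snd p) * cnj (wigner g f (fst p) (snd p)))
      = c0 * (\<integral>p. c0 * (\<integral>y. H p y \<partial>lborel) \<partial>lborel)"
    by (simp only: wig)
  also have "\<dots> = c0 * c0 * complex_of_real (2*pi) * (\<integral>y. \<integral>x. \<Phi> (x + y/2) (x - y/2) \<partial>lborel \<partial>lborel)"
    by (simp add: step1 mult_ac)
  also have "\<dots> = cov_pairing kb f g" by (simp only: c0sq step2 lhs mult_1_left)
  finally show "cov_pairing kb f g = c0 * (LINT p|lborel. \<sigma> (fst p) (snd p) * cnj (wigner g f (fst p) (snd p)))" ..
qed

end
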